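(* Let $k_1<k_2$ be positive integers, $M\subseteq\mathbb{N}$ infinite and $\varphi:[M]^{k_1}\to[\mathbb{N}]^{k_2}$ any map. Then there exists an infinite $L\subseteq M$ such that for every plegma pair $(s_1,s_2)$ in $[L]^{k_1}$, neither $(\varphi(s_1),\varphi(s_2))$ nor $(\varphi(s_2),\varphi(s_1))$ is a plegma pair in $[\mathbb{N}]^{k_2}$. In particular there is no infinite $L\subseteq M$ such that $\varphi$ maps every plegma family in $[L]^{k_1}$ to a plegma family in $[\mathbb{N}]^{k_2}$.
   Context: $[M]^k$ is the set of $k$-element subsets of $M$, each $s$ identified with its increasing enumeration $s(1)<\dots<s(k)$. A finite sequence $(s_j)_{j=1}^l$ in $[M]^k$ is a plegma family if $s_1(i)<\dots<s_l(i)$ for every $1\le i\le k$ and $s_l(i)<s_1(i+1)$ for every $1\le i<k$; a plegma pair is a plegma family of length 2. *)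

theory Defs
  imports Main
begin

definition ksubsets :: "nat set \<Rightarrow> nat \<Rightarrow> nat set set" where
  "ksubsets M k = {s. s \<subseteq> M \<and> finite s \<and> card s = k}"

text \<open>Increasing enumeration, 1-indexed: elt s i = s(i) for 1 <= i <= card s.\<close>
definition elt :: "nat set \<Rightarrow> nat \<Rightarrow> nat" where
  "elt s i = sorted_list_of_set s ! (i - 1)"

definition plegma_family :: "nat set \<Rightarrow> nat \<Rightarrow> nat set list \<Rightarrow> bool" where
  "plegma_family M k ss \<longleftrightarrow>
     ss \<noteq> [] \<and> (\<forall>s \<in> set ss. s \<in> ksubsets M k) \<and>
     (\<forall>i \<in> {1..k}. \<forall>j. Suc j < length ss \<longrightarrow> elt (ss ! j) i < elt (ss ! Suc j) i) \<and>
     (\<forall>i. 1 \<le> i \<and> i < k \<longrightarrow> elt (last ss) i < elt (hd ss) (Suc i))"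

definition plegma_pair :: "nat set \<Rightarrow> nat \<Rightarrow> nat set \<Rightarrow> nat set \<Rightarrow> bool" where
  "plegma_pair M k s1 s2 \<longleftrightarrow> plegma_family M k [s1, s2]"

end

theory Submission imports Defs "HOL-Library.Ramsey" "HOL-Library.Infinite_Set" begin

definition inc :: "nat \<Rightarrow> (nat \<Rightarrow> nat) \<Rightarrow> bool" where
  "inc n f \<longleftrightarrow> (\<forall>i j. 1 \<le> i \<longrightarrow> i < j \<longrightarrow> j \<le> n \<longrightarrow> f i < f j)"

lemma inc_step:
  assumes "\<And>i. 1 \<le> i \<Longrightarrow> i < n \<Longrightarrow> f i < f (Suc i)"
  shows "inc n f"
  unfolding inc_def
proof (intro allI impI)
  fix i j assume h: "1 \<le> i" "i < j" "j \<le> n"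
  show "f i < f j" using h
  proof (induction j)
    case 0 then show ?case by simp
  next
    case (Suc j)
    show ?case
    proof (cases "i = j")
      case True then show ?thesis using Suc.prems assms by simp
    next
      case False
      then have "f i < f j" using Suc by simp
      also have "f j < f (Suc j)" using Suc.prems False assms by simp
      finally show ?thesis .
    qed
  qed
qed

lemma inc_sorted:
  assumes "inc n f"
  shows "sorted_list_of_set (f ` {1..n}) = map f [1..<Suc n]"
proof -
  have inj: "inj_on f {1..n}"
    using assms unfolding inc_def inj_on_def
    by (metis atLeastAtMost_iff linorder_neqE_nat order_less_irrefl)
  have "sorted_wrt (<) (map f [1..<Suc n])"
    unfolding sorted_wrt_map
    by (rule sorted_wrt_mono_rel[OF _ sorted_wrt_upt]) (use assms in \<open>auto simp: inc_def\<close>)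
  moreover have "set (map f [1..<Suc n]) = f ` {1..n}"
    by (auto simp: atLeastLessThanSuc_atLeastAtMost)
  moreover have "length (map f [1..<Suc n]) = card (f ` {1..n})"
    using card_image[OF inj] by simp
  ultimately show ?thesis
    using sorted_list_of_set_unique[of "f ` {1..n}" "map f [1..<Suc n]"] by simp
qed

lemma inc_elt:
  assumes "inc n f" "1 \<le> i" "i \<le> n"
  shows "elt (f ` {1..n}) i = f i"
proof -
  have "elt (f ` {1..n}) i = map f [1..<Suc n] ! (i - 1)"
    unfolding elt_def inc_sorted[OF assms(1)] ..
  also have "\<dots> = f i" using assms(2,3) by (simp del: upt_Suc)
  finally show ?thesis .
qed
    
lemma inc_card:
  assumes "inc n f"
  shows "card (f ` {1..n}) = n"
  using arg_cong[OF inc_sorted[OF assms], of length]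
  by simp

lemma elt_inc:
  assumes "finite s" "card s = n"
  shows "inc n (elt s)" "elt s ` {1..n} = s"
proof -
  let ?l = "sorted_list_of_set s"
  have sw: "sorted_wrt (<) ?l" by simp
  have len: "length ?l = n" using assms by simp
  show "inc n (elt s)"
    unfolding inc_def elt_def
    using sorted_wrt_nth_less[OF sw] len by auto
  show "elt s ` {1..n} = s"
  proof
    show "elt s ` {1..n} \<subseteq> s"
    proof
      fix x assume "x \<in> elt s ` {1..n}"
      then obtain i where "1 \<le> i" "i \<le> n" "x = ?l ! (i - 1)" by (auto simp: elt_def)
      then show "x \<in> s" using nth_mem[of "i - 1" ?l] len assms by simp
    qed
  next
    show "s \<subseteq> elt s ` {1..n}"
    proof
      fix x assume "x \<in> s"
      then have "x \<in> set ?l" using assms by simp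
      then obtain k where "k < n" "?l ! k = x" using len by (auto simp: in_set_conv_nth)
      then show "x \<in> elt s ` {1..n}"
        by (intro image_eqI[of _ _ "Suc k"]) (auto simp: elt_def)
    qed
  qed
qed

lemma pp_intro:
  assumes "inc k f" "inc k g" "f ` {1..k} \<subseteq> L" "g ` {1..k} \<subseteq> L"
    and "\<And>i. 1 \<le> i \<Longrightarrow> i \<le> k \<Longrightarrow> f i < g i"
    and "\<And>i. 1 \<le> i \<Longrightarrow> i < k \<Longrightarrow> g i < f (Suc i)"
  shows "plegma_pair L k (f ` {1..k}) (g ` {1..k})"
proof -
  have j0: "j = 0" if "Suc j < length [a, b]" for j and a b :: "nat set" using that by simp
  show ?thesis
    unfolding plegma_pair_def plegma_family_def
    using assms inc_card[OF assms(1)] inc_card[OF assms(2)]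
    using inc_elt[OF assms(1)] inc_elt[OF assms(2)]
    by (auto simp: ksubsets_def simp del: One_nat_def dest!: j0)
qed

lemma pp_dest:
  assumes "plegma_pair M k u v"
  shows "\<And>i. 1 \<le> i \<Longrightarrow> i \<le> k \<Longrightarrow> elt u i < elt v i"
    "\<And>i. 1 \<le> i \<Longrightarrow> i < k \<Longrightarrow> elt v i < elt u (Suc i)"
    "u \<in> ksubsets M k" "v \<in> ksubsets M k"
proof -
  have d: "plegma_family M k [u, v]" using assms by (simp add: plegma_pair_def)
  show "\<And>i. 1 \<le> i \<Longrightarrow> i \<le> k \<Longrightarrow> elt u i < elt v i"
  proof -
    fix i assume i: "1 \<le> i" "i \<le> k"
    have c: "\<forall>i\<in>{1..k}. \<forall>j. Suc j < length [u,v] \<longrightarrow> elt ([u,v]!j) i < elt ([u,v]!Suc j) i"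
      using d unfolding plegma_family_def by blast
    then have "elt ([u,v]!0) i < elt ([u,v]!Suc 0) i" using i by simp
    then show "elt u i < elt v i" by simp
  qed
  show "\<And>i. 1 \<le> i \<Longrightarrow> i < k \<Longrightarrow> elt v i < elt u (Suc i)"
    using d unfolding plegma_family_def by simp
  show "u \<in> ksubsets M k" "v \<in> ksubsets M k"
    using d unfolding plegma_family_def by auto
qed

definition oddp :: "nat \<Rightarrow> nat set \<Rightarrow> nat set" where
  "oddp k X = (\<lambda>i. elt X (2*i - 1)) ` {1..k}"
definition evenp :: "nat \<Rightarrow> nat set \<Rightarrow> nat set" where
  "evenp k X = (\<lambda>i. elt X (2*i)) ` {1..k}"

lemma interleave:
  assumes "plegma_pair L k s1 s2"
  shows "s1 \<union> s2 \<subseteq> L" "finite (s1 \<union> s2)" "card (s1 \<union> s2) = 2*k"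
    "oddp k (s1 \<union> s2) = s1" "evenp k (s1 \<union> s2) = s2"
proof -
  note d = pp_dest[OF assms]
  have f1: "finite s1" "card s1 = k" and f2: "finite s2" "card s2 = k"
    using d(3,4) by (auto simp: ksubsets_def)
  define a where "a = elt s1"
  define b where "b = elt s2"
  have ia: "inc k a" and sa: "a ` {1..k} = s1" using elt_inc[OF f1] a_def by auto
  have ib: "inc k b" and sb: "b ` {1..k} = s2" using elt_inc[OF f2] b_def by auto
  define w where "w j = (if even j then b (j div 2) else a ((j+1) div 2))" for j
  have w_odd: "w (2*i - 1) = a i" if "1 \<le> i" for i
  proof -
    have "odd (2*i - 1)" "(2*i - 1 + 1) div 2 = i" using that by presburger+
    then show ?thesis by (simp add: w_def)
  qed
  have w_even: "w (2*i) = b i" for i by (simp add: w_def)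
  have iw: "inc (2*k) w"
  proof (rule inc_step)
    fix j assume j: "1 \<le> j" "j < 2*k"
    show "w j < w (Suc j)"
    proof (cases "even j")
      case True
      then obtain i where i: "j = 2*i" by blast
      then have "Suc j = 2*(Suc i) - 1" by simp
      then have "w (Suc j) = a (Suc i)" using w_odd[of "Suc i"] by simp
      moreover have "w j = b i" using i w_even by simp
      moreover have "b i < a (Suc i)" using d(2)[of i] i j a_def b_def by simp
      ultimately show ?thesis by simp
    next
      case False
      define i where "i = (j+1) div 2"
      have i: "j = 2*i - 1" "1 \<le> i" using False unfolding i_def by presburger+
      then have "Suc j = 2*i" by simp
      then have "w (Suc j) = b i" using w_even by simp
      moreover have "w j = a i" using i w_odd by simp
      moreover have "a i < b i" using d(1)[of i] i j a_def b_def by simp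
      ultimately show ?thesis by simp
    qed
  qed
  have img: "w ` {1..2*k} = s1 \<union> s2"
  proof
    show "w ` {1..2*k} \<subseteq> s1 \<union> s2"
    proof
      fix x assume "x \<in> w ` {1..2*k}"
      then obtain j where j: "1 \<le> j" "j \<le> 2*k" "x = w j" by auto
      show "x \<in> s1 \<union> s2"
      proof (cases "even j")
        case True
        then have "x = b (j div 2)" "1 \<le> j div 2" "j div 2 \<le> k" using j by (auto simp: w_def)
        then show ?thesis using sb by auto
      next
        case False
        have "(j+1) div 2 \<le> k" "1 \<le> (j+1) div 2" using j False by presburger+
        moreover have "x = a ((j+1) div 2)" using j False by (auto simp: w_def)
        ultimately show ?thesis using sa by auto
      qed
    qed
  next
    show "s1 \<union> s2 \<subseteq> w ` {1..2*k}"
    proof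
      fix x assume "x \<in> s1 \<union> s2"
      then show "x \<in> w ` {1..2*k}"
      proof
        assume "x \<in> s1"
        then obtain i where "1 \<le> i" "i \<le> k" "x = a i" using sa by auto
        then show ?thesis using w_odd by (intro image_eqI[of _ _ "2*i - 1"]) auto
      next
        assume "x \<in> s2"
        then obtain i where "1 \<le> i" "i \<le> k" "x = b i" using sb by auto
        then show ?thesis using w_even by (intro image_eqI[of _ _ "2*i"]) auto
      qed
    qed
  qed
  show "s1 \<union> s2 \<subseteq> L" using d(3,4) by (auto simp: ksubsets_def)
  show "finite (s1 \<union> s2)" using f1 f2 by simp
  show "card (s1 \<union> s2) = 2*k" using inc_card[OF iw] img by simp
  have e1: "elt (s1 \<union> s2) j = w j" if "1 \<le> j" "j \<le> 2*k" for j
    using inc_elt[OF iw that] img by simp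
  have "oddp k (s1 \<union> s2) = (\<lambda>i. w (2*i - 1)) ` {1..k}"
    unfolding oddp_def by (intro image_cong) (auto simp: e1)
  also have "\<dots> = a ` {1..k}" using w_odd by (intro image_cong) auto
  finally show "oddp k (s1 \<union> s2) = s1" using sa by simp
  have "evenp k (s1 \<union> s2) = (\<lambda>i. w (2*i)) ` {1..k}"
    unfolding evenp_def by (intro image_cong) (auto simp: e1)
  also have "\<dots> = b ` {1..k}" using w_even by (intro image_cong) auto
  finally show "evenp k (s1 \<union> s2) = s2" using sb by simp
qed

definition Xf :: "nat \<Rightarrow> nat \<Rightarrow> nat \<Rightarrow> nat" where
  "Xf k E d = (if d \<le> k then 2*d else (E+1)*3^d)"

definition Ff :: "nat \<Rightarrow> (nat \<Rightarrow> nat) \<Rightarrow> nat \<Rightarrow> nat \<Rightarrow> nat \<Rightarrow> nat" where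
  "Ff k y E m i = y (Xf k E (i+m) + k - m)"

lemma pow3_ge: "2*n + 1 \<le> (3::nat)^n"
  by (induction n) auto

lemma Xgap: "Xf k E d + 2 \<le> Xf k E (Suc d)"
proof -
  consider "Suc d \<le> k" | "d = k" | "d > k" by linarith
  then show ?thesis
  proof cases
    case 1 then show ?thesis by (simp add: Xf_def)
  next
    case 2
    have "2*(Suc k) + 1 \<le> 3^(Suc k)" by (rule pow3_ge)
    also have "\<dots> \<le> (E+1)*3^(Suc k)" by simp
    finally show ?thesis using 2 by (simp add: Xf_def)
  next
    case 3
    have "1 \<le> (E+1)*(3::nat)^d" by (simp add: Suc_le_eq)
    then have "(E+1)*3^d + 2 \<le> (E+1)*3^(Suc d)" by simp
    then show ?thesis using 3 by (simp add: Xf_def)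
  qed
qed

lemma Xmono: "d < d' \<Longrightarrow> Xf k E d < Xf k E d'"
proof (induction d')
  case 0 then show ?case by simp
next
  case (Suc d')
  then show ?case using Xgap[of k E d'] by (cases "d = d'") auto
qed

lemma Ff_inc:
  assumes "strict_mono y" "m \<le> k"
  shows "inc k (Ff k y E m)"
proof (rule inc_step)
  fix i assume "1 \<le> i" "i < k"
  have "Xf k E (i+m) + k - m < Xf k E (Suc i + m) + k - m"
    using Xmono[of "i+m" "Suc i + m" k E] assms(2) by simp
  then show "Ff k y E m i < Ff k y E m (Suc i)"
    unfolding Ff_def using assms(1) by (simp add: strict_mono_less)
qed

lemma Ff_in: "range y \<subseteq> Y \<Longrightarrow> Ff k y E m ` {1..k} \<subseteq> Y"
  unfolding Ff_def by auto

lemma chain_m: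
  assumes "strict_mono y" "range y \<subseteq> Y" "m < k"
  shows "plegma_pair Y k (Ff k y E m ` {1..k}) (Ff k y E (Suc m) ` {1..k})"
proof (rule pp_intro[OF Ff_inc Ff_inc Ff_in Ff_in])
  fix i assume "1 \<le> i" "i \<le> k"
  have "Xf k E (i+m) + k - m < Xf k E (Suc (i+m)) + k - Suc m"
    using Xgap[of k E "i+m"] assms(3) by simp
  then show "Ff k y E m i < Ff k y E (Suc m) i"
    unfolding Ff_def using assms(1) by (simp add: strict_mono_less)
next
  fix i assume "1 \<le> i" "i < k"
  have "Xf k E (i+ Suc m) + k - Suc m < Xf k E (Suc i + m) + k - m"
    using assms(3) by simp
  then show "Ff k y E (Suc m) i < Ff k y E m (Suc i)"
    unfolding Ff_def using assms(1) by (simp add: strict_mono_less)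
qed (use assms in auto)

lemma chain_E:
  assumes "strict_mono y" "range y \<subseteq> Y"
  shows "plegma_pair Y k (Ff k y E k ` {1..k}) (Ff k y (Suc E) k ` {1..k})"
proof (rule pp_intro[OF Ff_inc Ff_inc Ff_in Ff_in])
  fix i assume "1 \<le> i" "i \<le> k"
  have "Xf k E (i+k) < Xf k (Suc E) (i+k)"
    using \<open>1 \<le> i\<close> by (simp add: Xf_def)
  then show "Ff k y E k i < Ff k y (Suc E) k i"
    unfolding Ff_def using assms(1) by (simp add: strict_mono_less)
next
  fix i assume "1 \<le> i" "i < k"
  have "(E+2)*(3::nat)^(i+k) < (E+1)*3^(Suc (i+k))"
  proof -
    have "1 \<le> (3::nat)^(i+k)" by simp
    then show ?thesis by (simp add: algebra_simps)
  qed
  then have "Xf k (Suc E) (i+k) < Xf k E (Suc i + k)"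
    using \<open>1 \<le> i\<close> by (simp add: Xf_def)
  then show "Ff k y (Suc E) k i < Ff k y E k (Suc i)"
    unfolding Ff_def using assms(1) by (simp add: strict_mono_less)
qed (use assms in auto)

lemma base_F: "Ff k y E 0 ` {1..k} = Ff k y 0 0 ` {1..k}"
  by (intro image_cong) (auto simp: Ff_def Xf_def)

lemma part1:
  fixes k K :: nat and M :: "nat set" and \<phi> :: "nat set \<Rightarrow> nat set"
  assumes "0 < k" "k < K" "infinite M"
  shows "\<exists>L. L \<subseteq> M \<and> infinite L \<and>
            (\<forall>s1 s2. plegma_pair L k s1 s2 \<longrightarrow>
               \<not> plegma_pair UNIV K (\<phi> s1) (\<phi> s2) \<and>
               \<not> plegma_pair UNIV K (\<phi> s2) (\<phi> s1))"
proof -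
  define c where "c X = (if plegma_pair UNIV K (\<phi> (oddp k X)) (\<phi> (evenp k X)) then 0
      else if plegma_pair UNIV K (\<phi> (evenp k X)) (\<phi> (oddp k X)) then 1 else (2::nat))" for X
  have "\<forall>X. X \<subseteq> M \<and> finite X \<and> card X = 2*k \<longrightarrow> c X < 3" by (simp add: c_def)
  then obtain Y t where Y: "Y \<subseteq> M" "infinite Y" "t < 3"
    "\<forall>X. X \<subseteq> Y \<and> finite X \<and> card X = 2*k \<longrightarrow> c X = t"
    using Ramsey[of M "2*k" c 3] assms(3) by blast
  have hom: "(if plegma_pair UNIV K (\<phi> s1) (\<phi> s2) then 0
      else if plegma_pair UNIV K (\<phi> s2) (\<phi> s1) then 1 else (2::nat)) = t"
    if "plegma_pair Y k s1 s2" for s1 s2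
  proof -
    have "c (s1 \<union> s2) = t" using Y(4) interleave(1-3)[OF that] by blast
    then show ?thesis unfolding c_def interleave(4,5)[OF that] .
  qed
  define y where "y = enumerate Y"
  have sy: "strict_mono y" and ry: "range y \<subseteq> Y"
    using Y(2) strict_mono_enumerate range_enumerate unfolding y_def by auto
  define e where "e E m j = elt (\<phi> (Ff k y E m ` {1..k})) j" for E m j
  have K1: "1 \<le> K" using assms by simp
  consider "t = 0" | "t = 1" | "t = 2" using Y(3) by linarith
  then show ?thesis
  proof cases
    case 1
    have P: "plegma_pair UNIV K (\<phi> s1) (\<phi> s2)" if "plegma_pair Y k s1 s2" for s1 s2
    proof (rule ccontr)
      assume na: "\<not> plegma_pair UNIV K (\<phi> s1) (\<phi> s2)"
      have h: "(if plegma_pair UNIV K (\<phi> s1) (\<phi> s2) then 0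
        else if plegma_pair UNIV K (\<phi> s2) (\<phi> s1) then 1 else (2::nat)) = 0"
        using hom[OF that] unfolding 1 .
      show False
        using h na by (cases "plegma_pair UNIV K (\<phi> s1) (\<phi> s2)";
            cases "plegma_pair UNIV K (\<phi> s2) (\<phi> s1)") simp_all
    qed
    have i: "E \<le> e E k 1" for E
    proof (induction E)
      case 0 then show ?case by simp
    next
      case (Suc E)
      have "e E k 1 < e (Suc E) k 1"
        unfolding e_def using pp_dest(1)[OF P[OF chain_E[OF sy ry]] order_refl K1] .
      then show ?case using Suc by simp
    qed
    have ii: "\<forall>j. 1 \<le> j \<longrightarrow> j + m \<le> K \<longrightarrow> e E m j \<le> e E 0 (j+m)" if "m \<le> k" for m E
      using that
    proof (induction m)
      case 0 then show ?case by simp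
    next
      case (Suc m)
      show ?case
      proof (intro allI impI)
        fix j assume j: "1 \<le> j" "j + Suc m \<le> K"
        have "e E (Suc m) j < e E m (Suc j)"
          unfolding e_def using pp_dest(2)[OF P[OF chain_m[OF sy ry]]] Suc.prems j by simp
        also have "\<dots> \<le> e E 0 (Suc j + m)" using Suc.IH[rule_format, of "Suc j"] Suc.prems j by simp
        finally show "e E (Suc m) j \<le> e E 0 (j + Suc m)" by simp
      qed
    qed
    define E where "E = Suc (e 0 0 (1+k))"
    have "e E k 1 \<le> e E 0 (1+k)"
      using ii[of k E, rule_format, of 1] assms(2) by simp
    also have "\<dots> = e 0 0 (1+k)" unfolding e_def base_F[of k y E] ..
    finally have False using i[of E] E_def by linarith
    then show ?thesis by (rule FalseE)
  next
    case 2
    have P: "plegma_pair UNIV K (\<phi> s2) (\<phi> s1)" if "plegma_pair Y k s1 s2" for s1 s2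
    proof (rule ccontr)
      assume na: "\<not> plegma_pair UNIV K (\<phi> s2) (\<phi> s1)"
      have h: "(if plegma_pair UNIV K (\<phi> s1) (\<phi> s2) then 0
        else if plegma_pair UNIV K (\<phi> s2) (\<phi> s1) then 1 else (2::nat)) = 1"
        using hom[OF that] unfolding 2 .
      show False
        using h na by (cases "plegma_pair UNIV K (\<phi> s1) (\<phi> s2)";
            cases "plegma_pair UNIV K (\<phi> s2) (\<phi> s1)") simp_all
    qed
    have i: "e E k 1 + E \<le> e 0 k 1" for E
    proof (induction E)
      case 0 then show ?case by simp
    next
      case (Suc E)
      have "e (Suc E) k 1 < e E k 1"
        unfolding e_def using pp_dest(1)[OF P[OF chain_E[OF sy ry]] order_refl K1] .
      then show ?case using Suc by simp
    qed
    have False using i[of "Suc (e 0 k 1)"] by linarith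
    then show ?thesis by (rule FalseE)
  next
    case 3
    have N: "\<not> plegma_pair UNIV K (\<phi> s1) (\<phi> s2) \<and> \<not> plegma_pair UNIV K (\<phi> s2) (\<phi> s1)"
      if "plegma_pair Y k s1 s2" for s1 s2
    proof -
      have "(if plegma_pair UNIV K (\<phi> s1) (\<phi> s2) then 0
         else if plegma_pair UNIV K (\<phi> s2) (\<phi> s1) then 1 else (2::nat)) = 2"
        using hom[OF that] unfolding 3 .
      then show ?thesis
        by (cases "plegma_pair UNIV K (\<phi> s1) (\<phi> s2)";
            cases "plegma_pair UNIV K (\<phi> s2) (\<phi> s1)") simp_all
    qed
    show ?thesis
    proof (intro exI[of _ Y] conjI allI impI)
      fix s1 s2 assume "plegma_pair Y k s1 s2"
      from N[OF this] show "\<not> plegma_pair UNIV K (\<phi> s1) (\<phi> s2)" "\<not> plegma_pair UNIV K (\<phi> s2) (\<phi> s1)"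
        by blast+
    qed (use Y(1,2) in auto)
  qed
qed


lemma pp_mono:
  assumes "A \<subseteq> B" "plegma_pair A k s t"
  shows "plegma_pair B k s t"
  using assms unfolding plegma_pair_def plegma_family_def ksubsets_def by auto

theorem mainTheorem3:
  fixes k1 k2 :: nat and M :: "nat set" and \<phi> :: "nat set \<Rightarrow> nat set"
  assumes "0 < k1" and "k1 < k2" and "infinite M"
    and "\<forall>s \<in> ksubsets M k1. \<phi> s \<in> ksubsets UNIV k2"
  shows "(\<exists>L. L \<subseteq> M \<and> infinite L \<and>
            (\<forall>s1 s2. plegma_pair L k1 s1 s2 \<longrightarrow>
               \<not> plegma_pair UNIV k2 (\<phi> s1) (\<phi> s2) \<and>
               \<not> plegma_pair UNIV k2 (\<phi> s2) (\<phi> s1)))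
       \<and> \<not> (\<exists>L. L \<subseteq> M \<and> infinite L \<and>
            (\<forall>ss. plegma_family L k1 ss \<longrightarrow> plegma_family UNIV k2 (map \<phi> ss)))"
proof
  show "\<exists>L. L \<subseteq> M \<and> infinite L \<and>
            (\<forall>s1 s2. plegma_pair L k1 s1 s2 \<longrightarrow>
               \<not> plegma_pair UNIV k2 (\<phi> s1) (\<phi> s2) \<and>
               \<not> plegma_pair UNIV k2 (\<phi> s2) (\<phi> s1))"
    by (rule part1[OF assms(1-3)])
next
  show "\<not> (\<exists>L. L \<subseteq> M \<and> infinite L \<and>
            (\<forall>ss. plegma_family L k1 ss \<longrightarrow> plegma_family UNIV k2 (map \<phi> ss)))"
  proof
    assume "\<exists>L. L \<subseteq> M \<and> infinite L \<and>
            (\<forall>ss. plegma_family L k1 ss \<longrightarrow> plegma_family UNIV k2 (map \<phi> ss))"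
    then obtain L where L: "L \<subseteq> M" "infinite L"
      "\<And>ss. plegma_family L k1 ss \<Longrightarrow> plegma_family UNIV k2 (map \<phi> ss)" by blast
    obtain L2 where L2: "L2 \<subseteq> L" "infinite L2"
      "\<And>s1 s2. plegma_pair L2 k1 s1 s2 \<Longrightarrow> \<not> plegma_pair UNIV k2 (\<phi> s1) (\<phi> s2)"
      using part1[OF assms(1,2) L(2), of \<phi>] by blast
    define y where "y = enumerate L2"
    have sy: "strict_mono y" and ry: "range y \<subseteq> L2"
      using L2(2) strict_mono_enumerate range_enumerate unfolding y_def by auto
    define s1 where "s1 = Ff k1 y 0 k1 ` {1..k1}"
    define s2 where "s2 = Ff k1 y (Suc 0) k1 ` {1..k1}"
    have pp: "plegma_pair L2 k1 s1 s2" unfolding s1_def s2_def by (rule chain_E[OF sy ry])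
    then have "plegma_pair L k1 s1 s2" by (rule pp_mono[OF L2(1)])
    then have "plegma_family L k1 [s1, s2]" by (simp add: plegma_pair_def)
    then have "plegma_family UNIV k2 [\<phi> s1, \<phi> s2]" using L(3) by fastforce
    then have "plegma_pair UNIV k2 (\<phi> s1) (\<phi> s2)" by (simp add: plegma_pair_def)
    then show False using L2(3)[OF pp] by contradiction
  qed
qed

end
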